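(* Let $R$ be a nonzero commutative ring and let $\mathrm{Rd}(R)$ be endowed with the hull-kernel topology. If $\mathrm{Spec}(R)$ is infinite then $\dim(\mathrm{Rd}(R))=\infty$; if $\mathrm{Spec}(R)$ is finite then $\dim(\mathrm{Rd}(R))=|\mathrm{Spec}(R)|-1$. In all cases $\dim(\mathrm{Rd}(R))\ge\dim(\mathrm{Spec}(R))$. Moreover, if $\mathrm{Spec}(R)$ is linearly ordered by inclusion, then $\dim(\mathrm{Rd}(R))=\dim(\mathrm{Spec}(R))$.
   Context: $\mathrm{Rd}(R)$ is the set of proper radical ideals of $R$; its hull-kernel topology has as subbasis of closed sets the sets $\{H\in\mathrm{Rd}(R)\mid x_1,\dots,x_n\in H\}$ for $x_1,\dots,x_n\in R$. The dimension $\dim$ of a topological space is the supremum of lengths $t$ of chains $Z_0\subsetneq Z_1\subsetneq\dots\subsetneq Z_t$ of irreducible closed subsets; $|\cdot|$ denotes cardinality. *)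

theory Defs
  imports "HOL-Analysis.Analysis" "HOL-Algebra.Algebra" "HOL-Library.Extended_Nat"
begin

definition rad_ideal :: "('a, 'b) ring_scheme \<Rightarrow> 'a set \<Rightarrow> 'a set" where
  "rad_ideal R I = {x \<in> carrier R. \<exists>n::nat. x [^]\<^bsub>R\<^esub> n \<in> I}"

definition Rd :: "('a, 'b) ring_scheme \<Rightarrow> 'a set set" where
  "Rd R = {H. ideal H R \<and> H \<noteq> carrier R \<and> rad_ideal R H = H}"

definition Spec :: "('a, 'b) ring_scheme \<Rightarrow> 'a set set" where
  "Spec R = {P. primeideal P R}"

(* hull-kernel topology on a family X of ideals of R: the sets
   {H \<in> X. x1,...,xn \<in> H} (x1..xn \<in> R) form a subbasis of closed sets.
   On Spec R this is the Zariski topology. *)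
definition hull_kernel_top :: "('a, 'b) ring_scheme \<Rightarrow> 'a set set \<Rightarrow> 'a set topology" where
  "hull_kernel_top R Fam =
     topology_generated_by ((\<lambda>S. Fam - {H \<in> Fam. S \<subseteq> H}) ` {S. finite S \<and> S \<subseteq> carrier R})"

definition irreducible_closed :: "'x topology \<Rightarrow> 'x set \<Rightarrow> bool" where
  "irreducible_closed T Z \<longleftrightarrow> closedin T Z \<and> Z \<noteq> {} \<and>
     (\<forall>A B. closedin T A \<and> closedin T B \<and> Z \<subseteq> A \<union> B \<longrightarrow> Z \<subseteq> A \<or> Z \<subseteq> B)"

definition top_dim :: "'x topology \<Rightarrow> enat" where
  "top_dim T = Sup {enat t | t. \<exists>Z :: nat \<Rightarrow> 'x set.
      (\<forall>i\<le>t. irreducible_closed T (Z i)) \<and> (\<forall>i<t. Z i \<subset> Z (Suc i))}"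

end

theory Submission imports Defs begin

context cring
begin

lemma krull:
  assumes I: "ideal I R" and a: "a \<in> carrier R" and np: "\<forall>n::nat. a [^] n \<notin> I"
  shows "\<exists>P. primeideal P R \<and> I \<subseteq> P \<and> a \<notin> P"
proof -
  define S where "S = {J. ideal J R \<and> I \<subseteq> J \<and> (\<forall>n::nat. a [^] n \<notin> J)}"
  have "\<exists>M\<in>S. \<forall>J\<in>S. M \<subseteq> J \<longrightarrow> J = M"
  proof (rule subset_Zorn)
    fix C assume C: "subset.chain S C"
    show "\<exists>U\<in>S. \<forall>J\<in>C. J \<subseteq> U"
    proof (cases "C = {}")
      case True then show ?thesis using I np by (auto simp: S_def)
    next
      case False
      have ch: "subset.chain {J. ideal J R} C" using C unfolding pred_on.chain_def S_def by auto
      have "ideal (\<Union>C) R" using chain_Union_is_ideal[OF ch] False by simp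
      moreover have "I \<subseteq> \<Union>C" using False C unfolding pred_on.chain_def S_def by blast
      moreover have "\<forall>n::nat. a [^] n \<notin> \<Union>C" using C unfolding pred_on.chain_def S_def by auto
      ultimately show ?thesis unfolding S_def by auto
    qed
  qed
  then obtain M where MS: "M \<in> S" and Mmax: "\<And>J. J \<in> S \<Longrightarrow> M \<subseteq> J \<Longrightarrow> J = M" by blast
  have Mi: "ideal M R" and IM: "I \<subseteq> M" and Mnp: "\<And>n::nat. a [^] n \<notin> M" using MS by (auto simp: S_def)
  interpret M: ideal M R by (rule Mi)
  have ext: "\<exists>m::nat. \<exists>u\<in>M. \<exists>r\<in>carrier R. a [^] m = u \<oplus> r \<otimes> x" 
    if x: "x \<in> carrier R" "x \<notin> M" for x
  proof -
    have J: "ideal (M <+>\<^bsub>R\<^esub> PIdl x) R" by (rule add_ideals[OF Mi cgenideal_ideal[OF x(1)]])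
    let ?J = "M <+>\<^bsub>R\<^esub> PIdl x"
    have mem: "z \<in> ?J" if "u \<in> M" "r \<in> carrier R" "z = u \<oplus> r \<otimes> x" for z u r
    proof -
      have "r \<otimes> x \<in> PIdl x" unfolding cgenideal_def using that(2) by blast
      then show ?thesis unfolding set_add_def' using that(1,3) by blast
    qed
    have sub: "M \<subseteq> ?J"
    proof
      fix u assume u: "u \<in> M"
      then have "u = u \<oplus> \<zero> \<otimes> x" using x M.Icarr[OF u] by simp
      then show "u \<in> ?J" using mem[OF u] by blast
    qed
    have xJ: "x \<in> ?J" using mem[of \<zero> \<one> x] x by simp
    have "?J \<notin> S"
    proof
      assume "?J \<in> S"
      then have "?J = M" using Mmax sub by blast
      then show False using xJ x(2) by simp
    qed
    then obtain m::nat where "a [^] m \<in> ?J" 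
      using J IM sub unfolding S_def by blast
    then obtain h k where hk: "h \<in> M" "k \<in> PIdl x" "a [^] m = h \<oplus> k" unfolding set_add_def' by blast
    then obtain r where "r \<in> carrier R" "k = r \<otimes> x" unfolding cgenideal_def by blast
    then show ?thesis using hk by blast
  qed
  have "primeideal M R"
  proof (rule primeidealI[OF Mi is_cring])
    show "carrier R \<noteq> M" using Mnp[of 0] by auto
    fix x y assume xy: "x \<in> carrier R" "y \<in> carrier R" "x \<otimes> y \<in> M"
    show "x \<in> M \<or> y \<in> M"
    proof (rule ccontr)
      assume "\<not> (x \<in> M \<or> y \<in> M)"
      then obtain m u r n v s where u: "u \<in> M" "r \<in> carrier R" "a [^] (m::nat) = u \<oplus> r \<otimes> x"
        and v: "v \<in> M" "s \<in> carrier R" "a [^] (n::nat) = v \<oplus> s \<otimes> y"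
        using ext xy by meson
      have uc: "u \<in> carrier R" "v \<in> carrier R" using u v M.Icarr by auto
      define w where "w = v \<oplus> s \<otimes> y"
      have wc: "w \<in> carrier R" using uc v xy by (simp add: w_def)
      have "a [^] (m + n) = a [^] m \<otimes> a [^] n" using a by (simp add: nat_pow_mult)
      also have "\<dots> = u \<otimes> w \<oplus> (r \<otimes> x) \<otimes> w" using u v uc wc xy by (simp add: w_def l_distr)
      also have "(r \<otimes> x) \<otimes> w = (r \<otimes> x) \<otimes> v \<oplus> (r \<otimes> s) \<otimes> (x \<otimes> y)"
        using u v uc xy by (simp add: w_def r_distr m_ac)
      finally have eq: "a [^] (m + n) = u \<otimes> w \<oplus> ((r \<otimes> x) \<otimes> v \<oplus> (r \<otimes> s) \<otimes> (x \<otimes> y))" .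
      have "u \<otimes> w \<in> M" using u wc by (simp add: M.I_r_closed)
      moreover have "(r \<otimes> x) \<otimes> v \<in> M" using u v xy by (simp add: M.I_l_closed)
      moreover have "(r \<otimes> s) \<otimes> (x \<otimes> y) \<in> M" using u v xy by (simp add: M.I_l_closed)
      ultimately have "a [^] (m + n) \<in> M" unfolding eq by (simp add: M.a_closed)
      then show False using Mnp by blast
    qed
  qed
  moreover have "a \<notin> M" using Mnp[of 1] a by simp
  ultimately show ?thesis using IM by blast
qed


lemma prime_one: "primeideal P R \<Longrightarrow> \<one> \<notin> P"
proof
  assume P: "primeideal P R" and o: "\<one> \<in> P"
  interpret primeideal P R by (rule P)
  show False using one_imp_carrier[OF o] I_notcarr by simp
qed

lemma prime_carr: "primeideal P R \<Longrightarrow> P \<subseteq> carrier R"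
proof -
  assume P: "primeideal P R"
  interpret primeideal P R by (rule P)
  show ?thesis by (rule a_subset)
qed

lemma prime_pow:
  assumes P: "primeideal P R" and x: "x \<in> carrier R" shows "x [^] (n::nat) \<in> P \<Longrightarrow> x \<in> P"
proof (induction n)
  case 0 then show ?case using prime_one[OF P] by simp
next
  case (Suc n)
  then have "x [^] n \<otimes> x \<in> P" by simp
  then have "x [^] n \<in> P \<or> x \<in> P" using primeideal.I_prime[OF P] x by simp
  then show ?case using Suc by blast
qed

lemma Inter_Rd:
  assumes A: "A \<subseteq> Spec R" "A \<noteq> {}" shows "\<Inter>A \<in> Rd R"
proof -
  have pr: "\<And>P. P \<in> A \<Longrightarrow> primeideal P R" using A by (auto simp: Spec_def)
  have id: "ideal (\<Inter>A) R" by (rule i_Intersect) (use pr A in \<open>auto simp: primeideal_def\<close>)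
  obtain P0 where P0: "P0 \<in> A" using A by blast
  have sub: "\<Inter>A \<subseteq> carrier R" using prime_carr[OF pr[OF P0]] P0 by blast
  have "\<one> \<notin> \<Inter>A" using prime_one[OF pr[OF P0]] P0 by blast
  then have ne: "\<Inter>A \<noteq> carrier R" by auto
  have "rad_ideal R (\<Inter>A) = \<Inter>A"
  proof
    show "rad_ideal R (\<Inter>A) \<subseteq> \<Inter>A"
    proof
      fix x assume "x \<in> rad_ideal R (\<Inter>A)"
      then obtain n::nat where x: "x \<in> carrier R" "x [^] n \<in> \<Inter>A" unfolding rad_ideal_def by blast
      show "x \<in> \<Inter>A"
      proof
        fix P assume "P \<in> A"
        then show "x \<in> P" using prime_pow[OF pr[OF \<open>P \<in> A\<close>] x(1)] x(2) by blast
      qed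
    qed
    show "\<Inter>A \<subseteq> rad_ideal R (\<Inter>A)"
      unfolding rad_ideal_def
    proof
      fix x assume x: "x \<in> \<Inter>A"
      then have "x \<in> carrier R" using sub by blast
      then show "x \<in> {x \<in> carrier R. \<exists>n::nat. x [^] n \<in> \<Inter>A}" using x
        by (intro CollectI conjI exI[of _ "1::nat"]) auto
    qed
  qed
  then show ?thesis using id ne by (simp add: Rd_def)
qed

lemma Spec_Rd: "P \<in> Spec R \<Longrightarrow> P \<in> Rd R"
  using Inter_Rd[of "{P}"] by simp

lemma Rd_carr: "H \<in> Rd R \<Longrightarrow> H \<subseteq> carrier R \<and> \<one> \<notin> H"
proof -
  assume H: "H \<in> Rd R"
  then have I: "ideal H R" "H \<noteq> carrier R" unfolding Rd_def by auto
  interpret ideal H R by (rule I(1))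
  show ?thesis using one_imp_carrier I(2) a_subset by blast
qed

lemma Rd_avoid:
  assumes H: "H \<in> Rd R" and x: "x \<in> carrier R" "x \<notin> H"
  shows "\<exists>P\<in>Spec R. H \<subseteq> P \<and> x \<notin> P"
proof -
  have "\<forall>n::nat. x [^] n \<notin> H"
  proof (intro allI notI)
    fix n::nat assume "x [^] n \<in> H"
    then have "x \<in> rad_ideal R H" using x unfolding rad_ideal_def by blast
    then show False using H x unfolding Rd_def by auto
  qed
  then show ?thesis using krull[of H x] H x unfolding Rd_def Spec_def by auto
qed

lemma Rd_Inter:
  assumes H: "H \<in> Rd R"
  shows "H = \<Inter>{P\<in>Spec R. H \<subseteq> P}" "{P\<in>Spec R. H \<subseteq> P} \<noteq> {}"
proof -
  show "H = \<Inter>{P\<in>Spec R. H \<subseteq> P}"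
  proof
    show "\<Inter>{P\<in>Spec R. H \<subseteq> P} \<subseteq> H"
    proof
      fix x assume x: "x \<in> \<Inter>{P\<in>Spec R. H \<subseteq> P}"
      show "x \<in> H"
      proof (rule ccontr)
        assume xn: "x \<notin> H"
        obtain P0 where "P0 \<in> Spec R" "H \<subseteq> P0" using Rd_avoid[OF H one_closed] Rd_carr[OF H] by blast
        then have "x \<in> carrier R" using x prime_carr unfolding Spec_def by blast
        then show False using Rd_avoid[OF H _ xn] x by blast
      qed
    qed
  qed auto
  show "{P\<in>Spec R. H \<subseteq> P} \<noteq> {}" using Rd_avoid[OF H one_closed] Rd_carr[OF H] by blast
qed


lemma hk_open_iff:
  "openin (hull_kernel_top R Fam) U \<longleftrightarrow>
   generate_topology_on ((\<lambda>S. Fam - {H \<in> Fam. S \<subseteq> H}) ` {S. finite S \<and> S \<subseteq> carrier R}) U"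
  unfolding hull_kernel_top_def by (rule openin_topology_generated_by_iff)

lemma hk_topspace:
  assumes F: "\<And>H. H \<in> Fam \<Longrightarrow> \<one> \<notin> H"
  shows "topspace (hull_kernel_top R Fam) = Fam"
  unfolding hull_kernel_top_def topology_generated_by_topspace
proof
  show "\<Union> ((\<lambda>S. Fam - {H \<in> Fam. S \<subseteq> H}) ` {S. finite S \<and> S \<subseteq> carrier R}) \<subseteq> Fam" by blast
  show "Fam \<subseteq> \<Union> ((\<lambda>S. Fam - {H \<in> Fam. S \<subseteq> H}) ` {S. finite S \<and> S \<subseteq> carrier R})"
  proof
    fix H assume H: "H \<in> Fam"
    have "H \<in> Fam - {H \<in> Fam. {\<one>} \<subseteq> H}" using H F[OF H] by blast
    moreover have "{\<one>} \<in> {S. finite S \<and> S \<subseteq> carrier R}" by simp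
    ultimately show "H \<in> \<Union> ((\<lambda>S. Fam - {H \<in> Fam. S \<subseteq> H}) ` {S. finite S \<and> S \<subseteq> carrier R})" by blast
  qed
qed

lemma hk_closed_V:
  assumes F: "\<And>H. H \<in> Fam \<Longrightarrow> \<one> \<notin> H" and S: "S \<subseteq> carrier R"
  shows "closedin (hull_kernel_top R Fam) {H \<in> Fam. S \<subseteq> H}"
proof -
  let ?B = "(\<lambda>S. Fam - {H \<in> Fam. S \<subseteq> H}) ` {S. finite S \<and> S \<subseteq> carrier R}"
  have eq: "Fam - {H \<in> Fam. S \<subseteq> H} = \<Union>((\<lambda>s. Fam - {H \<in> Fam. {s} \<subseteq> H}) ` S)" by auto
  have "generate_topology_on ?B (\<Union>((\<lambda>s. Fam - {H \<in> Fam. {s} \<subseteq> H}) ` S))"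
  proof (rule generate_topology_on.UN)
    fix k assume "k \<in> (\<lambda>s. Fam - {H \<in> Fam. {s} \<subseteq> H}) ` S"
    then obtain s where "s \<in> S" "k = Fam - {H \<in> Fam. {s} \<subseteq> H}" by blast
    then have "k \<in> ?B" using S by blast
    then show "generate_topology_on ?B k" by (rule generate_topology_on.Basis)
  qed
  then have "openin (hull_kernel_top R Fam) (Fam - {H \<in> Fam. S \<subseteq> H})"
    unfolding hk_open_iff eq[symmetric] .
  then show ?thesis unfolding closedin_def using hk_topspace[OF F] by auto
qed

lemma hk_down:
  assumes "generate_topology_on ((\<lambda>S. Fam - {H \<in> Fam. S \<subseteq> H}) ` {S. finite S \<and> S \<subseteq> carrier R}) U"
  shows "\<forall>K\<in>U. \<forall>H\<in>Fam. H \<subseteq> K \<longrightarrow> H \<in> U"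
  using assms
proof (induction rule: generate_topology_on.induct)
  case (UN K) then show ?case by blast
next
  case (Basis s) then show ?case by blast
qed auto

lemma hk_closed_up:
  assumes F: "\<And>H. H \<in> Fam \<Longrightarrow> \<one> \<notin> H"
    and C: "closedin (hull_kernel_top R Fam) C" and H: "H \<in> C" and K: "K \<in> Fam" "H \<subseteq> K"
  shows "K \<in> C"
proof (rule ccontr)
  assume "K \<notin> C"
  have op: "openin (hull_kernel_top R Fam) (Fam - C)" and CF: "C \<subseteq> Fam"
    using C hk_topspace[OF F] unfolding closedin_def by auto
  have "H \<in> Fam - C"
    using hk_down[OF op[unfolded hk_open_iff]] K \<open>K \<notin> C\<close> H CF by blast
  then show False using H by blast
qed

lemma hk_prime_open:
  assumes Fs: "Fam \<subseteq> Spec R"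
    and "generate_topology_on ((\<lambda>S. Fam - {H \<in> Fam. S \<subseteq> H}) ` {S. finite S \<and> S \<subseteq> carrier R}) U"
  shows "\<forall>P\<in>U. P \<in> Fam \<longrightarrow> (\<exists>s\<in>carrier R. s \<notin> P \<and> (\<forall>Q\<in>Fam. s \<notin> Q \<longrightarrow> Q \<in> U))"
  using assms(2)
proof (induction rule: generate_topology_on.induct)
  case Empty then show ?case by simp
next
  case (Int a b)
  show ?case
  proof (intro ballI impI)
    fix P assume P: "P \<in> a \<inter> b" "P \<in> Fam"
    obtain s1 where s1: "s1 \<in> carrier R" "s1 \<notin> P" "\<forall>Q\<in>Fam. s1 \<notin> Q \<longrightarrow> Q \<in> a" using Int.IH(1) P by blast
    obtain s2 where s2: "s2 \<in> carrier R" "s2 \<notin> P" "\<forall>Q\<in>Fam. s2 \<notin> Q \<longrightarrow> Q \<in> b" using Int.IH(2) P by blast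
    have Pp: "primeideal P R" using P Fs by (auto simp: Spec_def)
    have "s1 \<otimes> s2 \<notin> P" using primeideal.I_prime[OF Pp s1(1) s2(1)] s1 s2 by blast
    moreover have "Q \<in> a \<inter> b" if Q: "Q \<in> Fam" "s1 \<otimes> s2 \<notin> Q" for Q
    proof -
      have Qp: "primeideal Q R" using Q Fs by (auto simp: Spec_def)
      interpret Q: primeideal Q R by (rule Qp)
      have "s1 \<notin> Q" using Q(2) Q.I_r_closed s2(1) by blast
      moreover have "s2 \<notin> Q" using Q(2) Q.I_l_closed s1(1) by blast
      ultimately show ?thesis using s1(3) s2(3) Q(1) by blast
    qed
    ultimately show "\<exists>s\<in>carrier R. s \<notin> P \<and> (\<forall>Q\<in>Fam. s \<notin> Q \<longrightarrow> Q \<in> a \<inter> b)"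
      using s1(1) s2(1) by blast
  qed
next
  case (UN K)
  show ?case
  proof (intro ballI impI)
    fix P assume P: "P \<in> \<Union>K" "P \<in> Fam"
    then obtain k where k: "k \<in> K" "P \<in> k" by blast
    then obtain s where "s \<in> carrier R" "s \<notin> P" "\<forall>Q\<in>Fam. s \<notin> Q \<longrightarrow> Q \<in> k" using UN.IH P by blast
    then show "\<exists>s\<in>carrier R. s \<notin> P \<and> (\<forall>Q\<in>Fam. s \<notin> Q \<longrightarrow> Q \<in> \<Union>K)" using k by blast
  qed
next
  case (Basis u)
  then obtain S where S: "finite S" "S \<subseteq> carrier R" "u = Fam - {H \<in> Fam. S \<subseteq> H}" by blast
  show ?case
  proof (intro ballI impI)
    fix P assume P: "P \<in> u" "P \<in> Fam"
    then obtain s where "s \<in> S" "s \<notin> P" using S by blast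
    then show "\<exists>s\<in>carrier R. s \<notin> P \<and> (\<forall>Q\<in>Fam. s \<notin> Q \<longrightarrow> Q \<in> u)" using S by blast
  qed
qed

lemma hk_spec_closed:
  assumes Fs: "Fam \<subseteq> Spec R" and C: "closedin (hull_kernel_top R Fam) C"
    and P: "P \<in> Fam" "\<Inter>C \<subseteq> P"
  shows "P \<in> C"
proof (rule ccontr)
  assume PC: "P \<notin> C"
  have F: "\<And>H. H \<in> Fam \<Longrightarrow> \<one> \<notin> H" using Fs prime_one by (auto simp: Spec_def)
  have op: "openin (hull_kernel_top R Fam) (Fam - C)"
    using C hk_topspace[OF F] unfolding closedin_def by auto
  obtain s where s: "s \<in> carrier R" "s \<notin> P" "\<forall>Q\<in>Fam. s \<notin> Q \<longrightarrow> Q \<in> Fam - C"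
    using hk_prime_open[OF Fs op[unfolded hk_open_iff]] P PC by blast
  have CF: "C \<subseteq> Fam" using C hk_topspace[OF F] unfolding closedin_def by auto
  have "s \<in> \<Inter>C" using s(3) CF by blast
  then show False using s P by blast
qed


lemma irr_V:
  assumes F: "\<And>H. H \<in> Fam \<Longrightarrow> \<one> \<notin> H \<and> H \<subseteq> carrier R" and H: "H \<in> Fam"
  shows "irreducible_closed (hull_kernel_top R Fam) {K \<in> Fam. H \<subseteq> K}"
proof -
  have F1: "\<And>H. H \<in> Fam \<Longrightarrow> \<one> \<notin> H" using F by blast
  have cl: "closedin (hull_kernel_top R Fam) {K \<in> Fam. H \<subseteq> K}"
    using hk_closed_V[OF F1] F[OF H] by blast
  show ?thesis unfolding irreducible_closed_def
  proof (intro conjI allI impI)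
    show "{K \<in> Fam. H \<subseteq> K} \<noteq> {}" using H by blast
    fix A B assume AB: "closedin (hull_kernel_top R Fam) A \<and> closedin (hull_kernel_top R Fam) B \<and>
      {K \<in> Fam. H \<subseteq> K} \<subseteq> A \<union> B"
    then have "H \<in> A \<or> H \<in> B" using H by blast
    then show "{K \<in> Fam. H \<subseteq> K} \<subseteq> A \<or> {K \<in> Fam. H \<subseteq> K} \<subseteq> B"
      using hk_closed_up[OF F1] AB by blast
  qed (rule cl)
qed

lemma dim_LB:
  assumes F: "\<And>H. H \<in> Fam \<Longrightarrow> \<one> \<notin> H \<and> H \<subseteq> carrier R"
    and H: "\<forall>i\<le>t. H i \<in> Fam" "\<forall>i<t. H (Suc i) \<subset> H i"
  shows "enat t \<le> top_dim (hull_kernel_top R Fam)"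
proof -
  define Z where "Z i = {K \<in> Fam. H i \<subseteq> K}" for i
  have "\<forall>i\<le>t. irreducible_closed (hull_kernel_top R Fam) (Z i)"
    using irr_V[OF F] H(1) unfolding Z_def by blast
  moreover have "\<forall>i<t. Z i \<subset> Z (Suc i)"
  proof (intro allI impI)
    fix i assume i: "i < t"
    have "H (Suc i) \<in> Z (Suc i)" using H(1) i unfolding Z_def by auto
    moreover have "H (Suc i) \<notin> Z i" using H(2) i unfolding Z_def by auto
    moreover have "Z i \<subseteq> Z (Suc i)" using H(2) i unfolding Z_def by auto
    ultimately show "Z i \<subset> Z (Suc i)" by blast
  qed
  ultimately show ?thesis unfolding top_dim_def by (intro Sup_upper) blast
qed

lemma prime_avoid:
  assumes "finite B" "B \<noteq> {}" "B \<subseteq> Spec R" and Q: "Q \<in> Spec R" and "\<Inter>B \<subseteq> Q"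
  shows "\<exists>P\<in>B. P \<subseteq> Q"
  using assms
proof (induction B rule: finite_ne_induct)
  case (singleton P) then show ?case by simp
next
  case (insert P B)
  show ?case
  proof (rule ccontr)
    assume no: "\<not> (\<exists>P'\<in>insert P B. P' \<subseteq> Q)"
    then have "\<not> \<Inter>B \<subseteq> Q" using insert by blast
    then obtain b where b: "b \<in> \<Inter>B" "b \<notin> Q" by blast
    obtain a where a: "a \<in> P" "a \<notin> Q" using no by blast
    have Pp: "primeideal P R" using insert by (auto simp: Spec_def)
    have Qp: "primeideal Q R" using Q by (auto simp: Spec_def)
    have ac: "a \<in> carrier R" using prime_carr[OF Pp] a by blast
    obtain P1 where "P1 \<in> B" using insert by blast
    then have "primeideal P1 R" using insert by (auto simp: Spec_def)
    then have bc: "b \<in> carrier R" using prime_carr b \<open>P1 \<in> B\<close> by blast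
    have "a \<otimes> b \<in> P" using Pp a bc by (simp add: ideal.I_r_closed primeideal_def)
    moreover have "a \<otimes> b \<in> P'" if "P' \<in> B" for P'
    proof -
      have "primeideal P' R" using insert that by (auto simp: Spec_def)
      then show ?thesis using b that ac by (simp add: ideal.I_l_closed primeideal_def)
    qed
    ultimately have "a \<otimes> b \<in> Q" using insert.prems by blast
    then show False using primeideal.I_prime[OF Qp ac bc] a b by blast
  qed
qed

lemma chain_exists:
  "finite A \<Longrightarrow> A \<subseteq> Spec R \<Longrightarrow> card A = Suc n \<Longrightarrow>
   \<exists>H. (\<forall>i\<le>n. H i \<in> Rd R) \<and> (\<forall>i<n. H (Suc i) \<subset> H i) \<and> H n = \<Inter>A"
proof (induction n arbitrary: A)
  case 0
  then obtain P where A: "A = {P}" using card_1_singletonE[of A] by auto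
  then have "P \<in> Rd R" using 0 Spec_Rd by blast
  then show ?case using A by (intro exI[of _ "\<lambda>_. P"]) auto
next
  case (Suc n)
  have "A \<noteq> {}" using Suc.prems by auto
  then obtain Q where Q: "Q \<in> A" and Qmin: "\<forall>P\<in>A. P \<subseteq> Q \<longrightarrow> Q = P"
    using finite_has_minimal[OF Suc.prems(1)] by blast
  let ?A = "A - {Q}"
  have cA: "card ?A = Suc n" using Suc.prems Q by simp
  obtain H where H: "\<forall>i\<le>n. H i \<in> Rd R" "\<forall>i<n. H (Suc i) \<subset> H i" "H n = \<Inter>?A"
  proof -
    have "?A \<subseteq> Spec R" "finite ?A" using Suc.prems by auto
    then show ?thesis using Suc.IH[of ?A] cA that by blast
  qed
  have neA: "?A \<noteq> {}" using cA by (metis card.empty nat.distinct(1))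
  have Ieq: "\<Inter>A = Q \<inter> \<Inter>?A" using Q by blast
  have "\<not> \<Inter>?A \<subseteq> Q"
  proof
    assume "\<Inter>?A \<subseteq> Q"
    then obtain P where "P \<in> ?A" "P \<subseteq> Q"
      using prime_avoid[of ?A Q] Suc.prems Q neA by blast
    then show False using Qmin by blast
  qed
  then have strict: "\<Inter>A \<subset> \<Inter>?A"
  proof -
    assume nq: "\<not> \<Inter>?A \<subseteq> Q"
    have "\<Inter>A \<subseteq> \<Inter>?A" unfolding Ieq by (rule Int_lower2)
    moreover have "\<Inter>A \<noteq> \<Inter>?A"
    proof
      assume "\<Inter>A = \<Inter>?A"
      then have "\<Inter>?A \<subseteq> Q" unfolding Ieq by (metis Int_lower1)
      then show False using nq by simp
    qed
    ultimately show ?thesis by (rule psubsetI)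
  qed
  define H' where "H' = H(Suc n := \<Inter>A)"
  have "\<Inter>A \<in> Rd R" using Inter_Rd Suc.prems \<open>A \<noteq> {}\<close> by blast
  then have "\<forall>i\<le>Suc n. H' i \<in> Rd R" using H(1) unfolding H'_def by (auto simp: le_Suc_eq)
  moreover have "\<forall>i<Suc n. H' (Suc i) \<subset> H' i"
  proof (intro allI impI)
    fix i assume "i < Suc n"
    then consider "i < n" | "i = n" by linarith
    then show "H' (Suc i) \<subset> H' i"
    proof cases
      case 1 then show ?thesis using H(2) unfolding H'_def by auto
    next
      case 2 then show ?thesis using strict H(3) unfolding H'_def by auto
    qed
  qed
  moreover have "H' (Suc n) = \<Inter>A" unfolding H'_def by simp
  ultimately show ?case by blast
qed


lemma irr_basic: "irreducible_closed T Z \<Longrightarrow> closedin T Z \<and> Z \<noteq> {}"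
  unfolding irreducible_closed_def by simp

lemma irr_split: "irreducible_closed T Z \<Longrightarrow> closedin T A \<Longrightarrow> closedin T B \<Longrightarrow> Z \<subseteq> A \<union> B
  \<Longrightarrow> Z \<subseteq> A \<or> Z \<subseteq> B"
  unfolding irreducible_closed_def by metis

lemma irr_union:
  assumes Z: "irreducible_closed T Z" and "finite F"
  shows "(\<forall>A\<in>F. closedin T A) \<Longrightarrow> Z \<subseteq> \<Union>F \<Longrightarrow> \<exists>A\<in>F. Z \<subseteq> A"
  using assms(2)
proof (induction F rule: finite_induct)
  case empty then show ?case using irr_basic[OF Z] by simp
next
  case (insert A F)
  have "closedin T (\<Union>F)" using insert by (intro closedin_Union) auto
  moreover have "closedin T A" using insert by blast
  moreover have "Z \<subseteq> A \<union> \<Union>F" using insert by blast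
  ultimately have "Z \<subseteq> A \<or> Z \<subseteq> \<Union>F" using irr_split[OF Z] by blast
  then show ?case using insert by blast
qed

lemma Rd_finite: "finite (Spec R) \<Longrightarrow> finite (Rd R)"
proof -
  assume fin: "finite (Spec R)"
  let ?f = "\<lambda>H. {P \<in> Spec R. H \<subseteq> P}"
  have "inj_on ?f (Rd R)"
  proof (rule inj_onI)
    fix H1 H2 assume h: "H1 \<in> Rd R" "H2 \<in> Rd R" "?f H1 = ?f H2"
    have "H1 = \<Inter>(?f H1)" by (rule Rd_Inter(1)[OF h(1)])
    also have "\<dots> = \<Inter>(?f H2)" using h(3) by simp
    also have "\<dots> = H2" by (rule Rd_Inter(1)[OF h(2), symmetric])
    finally show "H1 = H2" .
  qed
  moreover have "finite (?f ` Rd R)"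
    by (rule finite_subset[of _ "Pow (Spec R)"]) (use fin in auto)
  ultimately show ?thesis using finite_imageD by blast
qed

lemma pointZ:
  assumes fin: "finite (Rd R)" and Z: "irreducible_closed (hull_kernel_top R (Rd R)) Z"
  shows "\<exists>H\<in>Z. Z = {K \<in> Rd R. H \<subseteq> K}"
proof -
  have F1: "\<And>H. H \<in> Rd R \<Longrightarrow> \<one> \<notin> H" using Rd_carr by blast
  have Zc: "closedin (hull_kernel_top R (Rd R)) Z" using irr_basic[OF Z] by simp
  have ZR: "Z \<subseteq> Rd R" using closedin_subset[OF Zc] hk_topspace[OF F1] by simp
  let ?F = "(\<lambda>H. {K \<in> Rd R. H \<subseteq> K}) ` Z"
  have "finite ?F" using finite_subset[OF ZR fin] by blast
  moreover have "\<forall>A\<in>?F. closedin (hull_kernel_top R (Rd R)) A"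
  proof
    fix A assume "A \<in> ?F"
    then obtain H where H: "H \<in> Z" "A = {K \<in> Rd R. H \<subseteq> K}" by blast
    then have "H \<subseteq> carrier R" using Rd_carr ZR by blast
    then show "closedin (hull_kernel_top R (Rd R)) A" using hk_closed_V[OF F1] H(2) by simp
  qed
  moreover have "Z \<subseteq> \<Union>?F" using ZR by blast
  ultimately have "\<exists>A\<in>?F. Z \<subseteq> A" by (rule irr_union[OF Z])
  then obtain A where "A \<in> ?F" "Z \<subseteq> A" by blast
  then obtain H where H: "H \<in> Z" "Z \<subseteq> {K \<in> Rd R. H \<subseteq> K}" by blast
  moreover have "{K \<in> Rd R. H \<subseteq> K} \<subseteq> Z"
    using hk_closed_up[OF F1 Zc H(1)] by blast
  ultimately show ?thesis by blast
qed

lemma dim_UB: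
  assumes fin: "finite (Spec R)"
    and Z: "\<forall>i\<le>t. irreducible_closed (hull_kernel_top R (Rd R)) (Z i)" "\<forall>i<t. Z i \<subset> Z (Suc i)"
  shows "Suc t \<le> card (Spec R)"
proof -
  have finR: "finite (Rd R)" by (rule Rd_finite[OF fin])
  have "\<forall>i\<in>{..t}. \<exists>H. H \<in> Z i \<and> Z i = {K \<in> Rd R. H \<subseteq> K}"
    using pointZ[OF finR] Z(1) by blast
  then obtain H where H: "\<And>i. i \<le> t \<Longrightarrow> H i \<in> Z i \<and> Z i = {K \<in> Rd R. H i \<subseteq> K}"
    using bchoice[of "{..t}"] by (metis atMost_iff)
  have HR: "H i \<in> Rd R" if "i \<le> t" for i using H[OF that] by blast
  define g where "g i = {P \<in> Spec R. H i \<subseteq> P}" for i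
  have gsub: "g i \<subseteq> Spec R" for i unfolding g_def by blast
  have step: "g i \<subset> g (Suc i)" if i: "i < t" for i
  proof -
    have Hi: "Z i = {K \<in> Rd R. H i \<subseteq> K}" "Z (Suc i) = {K \<in> Rd R. H (Suc i) \<subseteq> K}"
      using H i by auto
    have "g i \<subseteq> g (Suc i)"
    proof
      fix P assume "P \<in> g i"
      then have "P \<in> Spec R" "H i \<subseteq> P" unfolding g_def by auto
      then have "P \<in> Z i" unfolding Hi(1) using Spec_Rd by simp
      then have "P \<in> Z (Suc i)" using Z(2) i by (meson psubsetD)
      then have "H (Suc i) \<subseteq> P" unfolding Hi(2) by simp
      then show "P \<in> g (Suc i)" using \<open>P \<in> Spec R\<close> unfolding g_def by simp
    qed
    moreover have "g i \<noteq> g (Suc i)"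
    proof
      assume "g i = g (Suc i)"
      have "H i = \<Inter>(g i)" unfolding g_def by (rule Rd_Inter(1)[OF HR]) (use i in simp)
      also have "\<dots> = \<Inter>(g (Suc i))" using \<open>g i = g (Suc i)\<close> by simp
      also have "\<dots> = H (Suc i)" unfolding g_def by (rule Rd_Inter(1)[OF HR, symmetric]) (use i in simp)
      finally have "H i = H (Suc i)" .
      then have "Z i = Z (Suc i)" using Hi by simp
      moreover have "Z i \<subset> Z (Suc i)" using Z(2) i by simp
      ultimately show False by simp
    qed
    ultimately show ?thesis by (rule psubsetI)
  qed
  have "i \<le> t \<Longrightarrow> Suc i \<le> card (g i)" for i
  proof (induction i)
    case 0
    have "g 0 \<noteq> {}" using Rd_Inter(2)[OF HR[of 0]] unfolding g_def by simp
    moreover have "finite (g 0)" using finite_subset[OF gsub fin] .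
    ultimately show ?case by (simp add: Suc_le_eq card_gt_0_iff)
  next
    case (Suc i)
    have "card (g i) < card (g (Suc i))"
      using psubset_card_mono[OF finite_subset[OF gsub fin] step] Suc.prems by simp
    then show ?case using Suc by simp
  qed
  then have "Suc t \<le> card (g t)" by simp
  also have "\<dots> \<le> card (Spec R)" using card_mono[OF fin gsub] .
  finally show ?thesis .
qed

lemma Spec_le_Rd:
  "top_dim (hull_kernel_top R (Spec R)) \<le> top_dim (hull_kernel_top R (Rd R))"
  unfolding top_dim_def[of "hull_kernel_top R (Spec R)"]
proof (rule Sup_least)
  fix x assume "x \<in> {enat t |t. \<exists>Z. (\<forall>i\<le>t. irreducible_closed (hull_kernel_top R (Spec R)) (Z i)) \<and>
      (\<forall>i<t. Z i \<subset> Z (Suc i))}"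
  then obtain t Z where x: "x = enat t" and Z: "\<forall>i\<le>t. irreducible_closed (hull_kernel_top R (Spec R)) (Z i)"
    "\<forall>i<t. Z i \<subset> Z (Suc i)" by blast
  have FS: "\<And>H. H \<in> Spec R \<Longrightarrow> \<one> \<notin> H" using prime_one by (auto simp: Spec_def)
  have ts: "topspace (hull_kernel_top R (Spec R)) = Spec R" by (rule hk_topspace) (rule FS)
  have ZS: "Z i \<subseteq> Spec R" "Z i \<noteq> {}" "closedin (hull_kernel_top R (Spec R)) (Z i)" if "i \<le> t" for i
  proof -
    have "closedin (hull_kernel_top R (Spec R)) (Z i) \<and> Z i \<noteq> {}" using irr_basic Z(1) that by blast
    then show "Z i \<subseteq> Spec R" "Z i \<noteq> {}" "closedin (hull_kernel_top R (Spec R)) (Z i)"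
      using closedin_subset[of "hull_kernel_top R (Spec R)" "Z i"] ts by auto
  qed
  define H where "H i = \<Inter>(Z i)" for i
  have "\<forall>i\<le>t. H i \<in> Rd R"
  proof (intro allI impI)
    fix i assume "i \<le> t"
    then show "H i \<in> Rd R" unfolding H_def using Inter_Rd[OF ZS(1) ZS(2)] by simp
  qed
  moreover have "\<forall>i<t. H (Suc i) \<subset> H i"
  proof (intro allI impI)
    fix i assume i: "i < t"
    have sub: "Z i \<subseteq> Z (Suc i)" using Z(2) i by (simp add: psubset_imp_subset)
    have "H (Suc i) \<subseteq> H i" unfolding H_def using sub by blast
    moreover have "H (Suc i) \<noteq> H i"
    proof
      assume eq: "H (Suc i) = H i"
      have "Z (Suc i) \<subseteq> Z i"
      proof
        fix P assume P: "P \<in> Z (Suc i)"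
        have "Z (Suc i) \<subseteq> Spec R" using ZS(1)[of "Suc i"] i by simp
        then have PS: "P \<in> Spec R" using P by (rule subsetD)
        have "\<Inter>(Z (Suc i)) \<subseteq> P" using P by (rule Inter_lower)
        then have "\<Inter>(Z i) \<subseteq> P" using eq unfolding H_def by simp
        then show "P \<in> Z i" using hk_spec_closed[OF subset_refl ZS(3)[of i] PS] i by simp
      qed
      moreover have "Z i \<subset> Z (Suc i)" using Z(2) i by simp
      then have "\<not> Z (Suc i) \<subseteq> Z i" by (simp add: less_le_not_le)
      ultimately show False by simp
    qed
    ultimately show "H (Suc i) \<subset> H i" by (rule psubsetI)
  qed
  ultimately have "enat t \<le> top_dim (hull_kernel_top R (Rd R))"
  proof -
    have "\<And>H. H \<in> Rd R \<Longrightarrow> \<one> \<notin> H \<and> H \<subseteq> carrier R" using Rd_carr by blast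
    then show ?thesis using dim_LB[of "Rd R" t H] \<open>\<forall>i\<le>t. H i \<in> Rd R\<close> \<open>\<forall>i<t. H (Suc i) \<subset> H i\<close> by blast
  qed
  then show "x \<le> top_dim (hull_kernel_top R (Rd R))" using x by simp
qed

lemma linear_Rd:
  assumes lin: "\<forall>P\<in>Spec R. \<forall>Q\<in>Spec R. P \<subseteq> Q \<or> Q \<subseteq> P"
  shows "Rd R = Spec R"
proof
  show "Spec R \<subseteq> Rd R" using Spec_Rd by blast
  show "Rd R \<subseteq> Spec R"
  proof
    fix H assume H: "H \<in> Rd R"
    have I: "ideal H R" "carrier R \<noteq> H" using H unfolding Rd_def by auto
    have "primeideal H R"
    proof (rule primeidealI[OF I(1) is_cring I(2)])
      fix a b assume ab: "a \<in> carrier R" "b \<in> carrier R" "a \<otimes> b \<in> H"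
      show "a \<in> H \<or> b \<in> H"
      proof (rule ccontr)
        assume "\<not> (a \<in> H \<or> b \<in> H)"
        then obtain P Q where P: "P \<in> Spec R" "H \<subseteq> P" "a \<notin> P" and Q: "Q \<in> Spec R" "H \<subseteq> Q" "b \<notin> Q"
          using Rd_avoid[OF H] ab by meson
        have "a \<otimes> b \<in> P" "a \<otimes> b \<in> Q" using ab P Q by auto
        moreover have "primeideal P R" "primeideal Q R" using P Q by (auto simp: Spec_def)
        ultimately have "a \<in> P \<or> b \<in> P" "a \<in> Q \<or> b \<in> Q"
          using primeideal.I_prime[OF _ ab(1) ab(2)] by blast+
        then show False using lin P Q by blast
      qed
    qed
    then show "H \<in> Spec R" by (simp add: Spec_def)
  qed
qed

end

theorem proposition4p2:
  fixes R :: "('a, 'b) ring_scheme"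
  assumes "cring R" and "\<one>\<^bsub>R\<^esub> \<noteq> \<zero>\<^bsub>R\<^esub>"
  shows "(infinite (Spec R) \<longrightarrow> top_dim (hull_kernel_top R (Rd R)) = \<infinity>)
    \<and> (finite (Spec R) \<longrightarrow> top_dim (hull_kernel_top R (Rd R)) = enat (card (Spec R) - 1))
    \<and> top_dim (hull_kernel_top R (Spec R)) \<le> top_dim (hull_kernel_top R (Rd R))
    \<and> ((\<forall>P\<in>Spec R. \<forall>Q\<in>Spec R. P \<subseteq> Q \<or> Q \<subseteq> P) \<longrightarrow>
         top_dim (hull_kernel_top R (Rd R)) = top_dim (hull_kernel_top R (Spec R)))"
proof -
  interpret cring R by fact
  have FR: "\<And>H. H \<in> Rd R \<Longrightarrow> \<one>\<^bsub>R\<^esub> \<notin> H \<and> H \<subseteq> carrier R" using Rd_carr by blast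
  have "\<forall>n::nat. \<one>\<^bsub>R\<^esub> [^]\<^bsub>R\<^esub> n \<notin> {\<zero>\<^bsub>R\<^esub>}" using assms(2) by simp
  then obtain P0 where "primeideal P0 R" using krull[OF zeroideal one_closed] by blast
  then have Sne: "Spec R \<noteq> {}" by (auto simp: Spec_def)
  have LB: "enat n \<le> top_dim (hull_kernel_top R (Rd R))"
    if fA: "finite A" and sA: "A \<subseteq> Spec R" and cA: "card A = Suc n" for A n
  proof -
    obtain H where "\<forall>i\<le>n. H i \<in> Rd R" "\<forall>i<n. H (Suc i) \<subset> H i"
      using chain_exists[OF fA sA cA] by blast
    then show ?thesis using dim_LB[OF FR] by blast
  qed
  have A: "infinite (Spec R) \<longrightarrow> top_dim (hull_kernel_top R (Rd R)) = \<infinity>"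
  proof
    assume inf: "infinite (Spec R)"
    have all: "enat n \<le> top_dim (hull_kernel_top R (Rd R))" for n
    proof -
      obtain B where "finite B" "card B = Suc n" "B \<subseteq> Spec R"
        using infinite_arbitrarily_large[OF inf] by blast
      then show ?thesis using LB by blast
    qed
    show "top_dim (hull_kernel_top R (Rd R)) = \<infinity>"
    proof (cases "top_dim (hull_kernel_top R (Rd R))")
      case (enat m)
      then show ?thesis using all[of "Suc m"] by simp
    qed simp
  qed
  have B: "finite (Spec R) \<longrightarrow> top_dim (hull_kernel_top R (Rd R)) = enat (card (Spec R) - 1)"
  proof
    assume fin: "finite (Spec R)"
    then obtain m where m: "card (Spec R) = Suc m" using Sne
      by (metis card_0_eq not0_implies_Suc)
    have "enat m \<le> top_dim (hull_kernel_top R (Rd R))" using LB[OF fin _ m] by blast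
    moreover have "top_dim (hull_kernel_top R (Rd R)) \<le> enat m"
      unfolding top_dim_def
    proof (rule Sup_least)
      fix x assume "x \<in> {enat t |t. \<exists>Z. (\<forall>i\<le>t. irreducible_closed (hull_kernel_top R (Rd R)) (Z i)) \<and>
        (\<forall>i<t. Z i \<subset> Z (Suc i))}"
      then obtain t Z where x: "x = enat t" and Z: "\<forall>i\<le>t. irreducible_closed (hull_kernel_top R (Rd R)) (Z i)"
        "\<forall>i<t. Z i \<subset> Z (Suc i)" by blast
      have "Suc t \<le> card (Spec R)" by (rule dim_UB[OF fin Z])
      then show "x \<le> enat m" using x m by simp
    qed
    ultimately show "top_dim (hull_kernel_top R (Rd R)) = enat (card (Spec R) - 1)"
      using m by simp
  qed
  have C: "top_dim (hull_kernel_top R (Spec R)) \<le> top_dim (hull_kernel_top R (Rd R))"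
    by (rule Spec_le_Rd)
  have D: "(\<forall>P\<in>Spec R. \<forall>Q\<in>Spec R. P \<subseteq> Q \<or> Q \<subseteq> P) \<longrightarrow>
         top_dim (hull_kernel_top R (Rd R)) = top_dim (hull_kernel_top R (Spec R))"
    using linear_Rd by simp
  show ?thesis using A B C D by blast
qed

end
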